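(* Let $M>0$, $0\le a<M$, $r_+=M+\sqrt{M^2-a^2}$ and $\Delta(r)=r^2-2Mr+a^2$. For $\mathcal{Q}\ge 0$ and $r>r_+$ define $$V_{\pm}(r,\mathcal Q)=\frac{2Mar\pm\sqrt{r\Delta(r)\big((1+\mathcal Q)r^3+a^2\mathcal Q(r+2M)\big)}}{r\,[\,r(r^2+a^2)+2Ma^2\,]}.$$ Then for every fixed $\mathcal Q\ge 0$, each of the functions $r\mapsto V_+(r,\mathcal Q)$ and $r\mapsto V_-(r,\mathcal Q)$ has exactly one local extremum in the interval $(r_+,\infty)$.
   Context: These are the "pseudo potentials" for null geodesics in the exterior of a sub-extremal Kerr spacetime in Boyer–Lindquist coordinates. For a null geodesic with $L_z\neq0$, set $\mathcal E=E/L_z$ and $\mathcal Q=Q/L_z^2$, where $E$ is the energy, $L_z$ the axial angular momentum and $Q=K-(aE-L_z)^2$ with $K$ Carter's constant. The radial function $R(r)=((r^2+a^2)E-aL_z)^2-\Delta(r)K$ satisfies $R=L_z^2\, r[r(r^2+a^2)+2Ma^2](\mathcal E-V_+(r,\mathcal Q))(\mathcal E-V_-(r,\mathcal Q))$, so $V_\pm(r,\mathcal Q)$ are the two values of $\mathcal E$ for which $r$ is a radial turning point. *)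

theory Defs
  imports Complex_Main
begin

definition kerr_Delta :: "real \<Rightarrow> real \<Rightarrow> real \<Rightarrow> real" where
  "kerr_Delta M a r = r^2 - 2*M*r + a^2"

definition r_plus :: "real \<Rightarrow> real \<Rightarrow> real" where
  "r_plus M a = M + sqrt (M^2 - a^2)"

definition V_plus :: "real \<Rightarrow> real \<Rightarrow> real \<Rightarrow> real \<Rightarrow> real" where
  "V_plus M a r Q =
     (2*M*a*r + sqrt (r * kerr_Delta M a r * ((1 + Q) * r^3 + a^2 * Q * (r + 2*M))))
     / (r * (r * (r^2 + a^2) + 2*M*a^2))"

definition V_minus :: "real \<Rightarrow> real \<Rightarrow> real \<Rightarrow> real \<Rightarrow> real" where
  "V_minus M a r Q =
     (2*M*a*r - sqrt (r * kerr_Delta M a r * ((1 + Q) * r^3 + a^2 * Q * (r + 2*M))))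
     / (r * (r * (r^2 + a^2) + 2*M*a^2))"

definition local_extremum_on :: "real set \<Rightarrow> (real \<Rightarrow> real) \<Rightarrow> real \<Rightarrow> bool" where
  "local_extremum_on S f x \<longleftrightarrow> x \<in> S \<and>
     ((\<exists>e>0. \<forall>y\<in>S. \<bar>y - x\<bar> < e \<longrightarrow> f y \<le> f x) \<or>
      (\<exists>e>0. \<forall>y\<in>S. \<bar>y - x\<bar> < e \<longrightarrow> f x \<le> f y))"

end

theory Submission
  imports Defs
begin


lemma cross:
  fixes k :: "real \<Rightarrow> real"
  assumes "continuous_on {p..} k" "p \<le> u" "u < v"
    "(k u < c \<and> c < k v) \<or> (k v < c \<and> c < k u)"
  shows "\<exists>x. u < x \<and> x < v \<and> k x = c"
proof -
  have cc: "continuous_on {u..v} k" using assms(1,2) continuous_on_subset by fastforce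
  from assms(4) show ?thesis
  proof
    assume h: "k u < c \<and> c < k v"
    then obtain x where "u \<le> x" "x \<le> v" "k x = c" using IVT'[of k u c v] cc assms(3) by force
    thus ?thesis using h by (metis order.order_iff_strict less_irrefl)
  next
    assume h: "k v < c \<and> c < k u"
    then obtain x where "u \<le> x" "x \<le> v" "k x = c" using IVT2'[of k v c u] cc assms(3) by force
    thus ?thesis using h by (metis order.order_iff_strict less_irrefl)
  qed
qed

lemma shape_unique:
  fixes k :: "real \<Rightarrow> real"
  assumes "m > p" "\<forall>x>p. k x \<le> k m"
    and inc: "\<forall>u v. p<u \<longrightarrow> u<v \<longrightarrow> v\<le>m \<longrightarrow> k u < k v"
    and dec: "\<forall>u v. m\<le>u \<longrightarrow> u<v \<longrightarrow> k v < k u"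
  shows "\<exists>!x. local_extremum_on {p<..} k x"
proof
  show "local_extremum_on {p<..} k m"
    unfolding local_extremum_on_def using assms(1,2) by (auto intro!: exI[of _ 1])
next
  fix x assume le: "local_extremum_on {p<..} k x"
  hence xp: "x > p" by (simp add: local_extremum_on_def)
  obtain e where e: "e > 0" and
    H: "(\<forall>y\<in>{p<..}. \<bar>y - x\<bar> < e \<longrightarrow> k y \<le> k x) \<or> (\<forall>y\<in>{p<..}. \<bar>y - x\<bar> < e \<longrightarrow> k x \<le> k y)"
    using le unfolding local_extremum_on_def by blast
  show "x = m"
  proof (rule ccontr)
    assume "x \<noteq> m"
    hence "x < m \<or> x > m" by auto
    thus False
    proof
      assume xm: "x < m"
      define d where "d = min (e/2) (min ((m-x)/2) ((x-p)/2))"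
      have d: "d > 0" "d < e" "d \<le> m - x" "d < x - p" using e xm xp unfolding d_def min_def by auto
      have 1: "k (x-d) < k x" using inc d xp by auto
      have 2: "k x < k (x+d)" using inc d xp by auto
      from H show False
      proof
        assume "\<forall>y\<in>{p<..}. \<bar>y - x\<bar> < e \<longrightarrow> k y \<le> k x"
        hence "k (x+d) \<le> k x" using d xp by auto
        thus False using 2 by simp
      next
        assume "\<forall>y\<in>{p<..}. \<bar>y - x\<bar> < e \<longrightarrow> k x \<le> k y"
        hence "k x \<le> k (x-d)" using d xp by auto
        thus False using 1 by simp
      qed
    next
      assume xm: "x > m"
      define d where "d = min (e/2) ((x-m)/2)"
      have d: "d > 0" "d < e" "d \<le> x - m" using e xm unfolding d_def min_def by auto
      have 1: "k x < k (x-d)" using dec d by auto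
      have 2: "k (x+d) < k x" using dec d xm by auto
      from H show False
      proof
        assume "\<forall>y\<in>{p<..}. \<bar>y - x\<bar> < e \<longrightarrow> k y \<le> k x"
        hence "k (x-d) \<le> k x" using d xp assms(1) by auto
        thus False using 1 by simp
      next
        assume "\<forall>y\<in>{p<..}. \<bar>y - x\<bar> < e \<longrightarrow> k x \<le> k y"
        hence "k x \<le> k (x+d)" using d xp by auto
        thus False using 2 by simp
      qed
    qed
  qed
qed

lemma three_roots:
  fixes A C D F x1 x2 x3 :: real
  assumes d: "x1 \<noteq> x2" "x1 \<noteq> x3" "x2 \<noteq> x3"
    and r: "A*x1^4 + C*x1^2 + D*x1 + F = 0" "A*x2^4 + C*x2^2 + D*x2 + F = 0" "A*x3^4 + C*x3^2 + D*x3 + F = 0"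
  shows "A*(x3^2 + x3*x2 + x2^2 + x1*x3 + x1*x2 + x1^2) + C = 0"
proof -
  have i2: "(x2-x1)*(A*(x2^3+x2^2*x1+x2*x1^2+x1^3) + C*(x2+x1) + D)
      = (A*x2^4 + C*x2^2 + D*x2 + F) - (A*x1^4 + C*x1^2 + D*x1 + F)" by algebra
  have e2: "A*(x2^3+x2^2*x1+x2*x1^2+x1^3) + C*(x2+x1) + D = 0" using i2 r d by simp
  have i3: "(x3-x1)*(A*(x3^3+x3^2*x1+x3*x1^2+x1^3) + C*(x3+x1) + D)
      = (A*x3^4 + C*x3^2 + D*x3 + F) - (A*x1^4 + C*x1^2 + D*x1 + F)" by algebra
  have e3: "A*(x3^3+x3^2*x1+x3*x1^2+x1^3) + C*(x3+x1) + D = 0" using i3 r d by simp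
  have i: "(x3-x2)*(A*(x3^2 + x3*x2 + x2^2 + x1*x3 + x1*x2 + x1^2) + C)
     = (A*(x3^3+x3^2*x1+x3*x1^2+x1^3) + C*(x3+x1) + D) - (A*(x2^3+x2^2*x1+x2*x1^2+x1^3) + C*(x2+x1) + D)"
    by algebra
  thus ?thesis using e2 e3 d by simp
qed

lemma four_roots:
  fixes A C D F x1 x2 x3 x4 :: real
  assumes d: "x1 \<noteq> x2" "x1 \<noteq> x3" "x2 \<noteq> x3" "x1 \<noteq> x4" "x2 \<noteq> x4" "x3 \<noteq> x4"
    and r: "A*x1^4 + C*x1^2 + D*x1 + F = 0" "A*x2^4 + C*x2^2 + D*x2 + F = 0"
      "A*x3^4 + C*x3^2 + D*x3 + F = 0" "A*x4^4 + C*x4^2 + D*x4 + F = 0"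
  shows "A*(x1+x2+x3+x4) = 0"
proof -
  have a: "A*(x3^2 + x3*x2 + x2^2 + x1*x3 + x1*x2 + x1^2) + C = 0"
    using three_roots[of x1 x2 x3 A C D F] d r by simp
  have b: "A*(x4^2 + x4*x2 + x2^2 + x1*x4 + x1*x2 + x1^2) + C = 0"
    using three_roots[of x1 x2 x4 A C D F] d r by simp
  have "(x3 - x4)*(A*(x1+x2+x3+x4)) = (A*(x3^2 + x3*x2 + x2^2 + x1*x3 + x1*x2 + x1^2) + C)
     - (A*(x4^2 + x4*x2 + x2^2 + x1*x4 + x1*x2 + x1^2) + C)" by algebra
  thus ?thesis using a b d by simp
qed

lemma exists_max:
  fixes k :: "real \<Rightarrow> real"
  assumes "continuous_on {p..} k" "x1 > p" "k x1 > k p" "\<forall>x\<ge>X. k x < k x1"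
  shows "\<exists>m>p. \<forall>x>p. k x \<le> k m"
proof -
  define Y where "Y = max X x1"
  have "continuous_on {p..Y} k" using assms(1) continuous_on_subset by fastforce
  then obtain m where m: "m \<in> {p..Y}" "\<forall>y\<in>{p..Y}. k y \<le> k m"
    using continuous_attains_sup[of "{p..Y}" k] assms(2) Y_def by fastforce
  have "k x1 \<le> k m" using m assms(2) Y_def by auto
  hence "m \<noteq> p" using assms(3) by auto
  hence mp: "m > p" using m by auto
  have "\<forall>x>p. k x \<le> k m"
  proof (intro allI impI)
    fix x assume "x > p"
    show "k x \<le> k m"
    proof (cases "x \<le> Y")
      case True thus ?thesis using m \<open>x > p\<close> by auto
    next
      case False hence "x \<ge> X" using Y_def by auto
      thus ?thesis using assms(4) \<open>k x1 \<le> k m\<close> by force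
    qed
  qed
  thus ?thesis using mp by blast
qed

locale shp =
  fixes p L :: real and f h :: "real \<Rightarrow> real"
  assumes cf: "continuous_on {p..} f" and ch: "continuous_on {p..} h"
    and fp: "f p = L" and hp: "h p = L" and L0: "L \<ge> 0"
    and hf: "\<And>x. x > p \<Longrightarrow> h x < f x"
    and fpos: "\<And>x. x > p \<Longrightarrow> f x > 0"
    and P3: "\<And>c x y z. p < x \<Longrightarrow> p < y \<Longrightarrow> p < z \<Longrightarrow> x \<noteq> y \<Longrightarrow> x \<noteq> z \<Longrightarrow> y \<noteq> z
      \<Longrightarrow> (f x = c \<or> h x = c) \<Longrightarrow> (f y = c \<or> h y = c) \<Longrightarrow> (f z = c \<or> h z = c) \<Longrightarrow> False"
    and tf: "\<And>e. e > 0 \<Longrightarrow> \<exists>X. \<forall>x\<ge>X. \<bar>f x\<bar> < e"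
    and th: "\<And>e. e > 0 \<Longrightarrow> \<exists>X. \<forall>x\<ge>X. \<bar>h x\<bar> < e"
    and exf: "\<exists>x>p. f x > L"
    and exh: "\<exists>x>p. h x < 0"
begin

lemma tf': "e > 0 \<Longrightarrow> \<exists>x>B. \<bar>f x\<bar> < e"
proof -
  assume "e > 0" then obtain X where "\<forall>x\<ge>X. \<bar>f x\<bar> < e" using tf by blast
  thus ?thesis by (intro exI[of _ "max X (B+1)"]) auto
qed

lemma th': "e > 0 \<Longrightarrow> \<exists>x>B. \<bar>h x\<bar> < e"
proof -
  assume "e > 0" then obtain X where "\<forall>x\<ge>X. \<bar>h x\<bar> < e" using th by blast
  thus ?thesis by (intro exI[of _ "max X (B+1)"]) auto
qed

lemma f_max: "\<exists>m>p. \<forall>x>p. f x \<le> f m"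
proof -
  obtain x1 where x1: "x1 > p" "f x1 > L" using exf by blast
  have "f x1 > 0" using fpos x1 by auto
  then obtain X where "\<forall>x\<ge>X. \<bar>f x\<bar> < f x1" using tf by blast
  hence "\<forall>x\<ge>X. f x < f x1" by force
  thus ?thesis using exists_max[OF cf x1(1)] x1 fp by auto
qed

lemma f_dec:
  assumes m: "m > p" "\<forall>x>p. f x \<le> f m" and uv: "m \<le> u" "u < v"
  shows "f v < f u"
proof -
  have ni: "\<not> f u < f v" if A: "m \<le> u" "u < v" for u v
  proof
    assume lt: "f u < f v"
    have "u \<noteq> m"
    proof
      assume "u = m" hence "f v \<le> f u" using m A by auto
      thus False using lt by simp
    qed
    hence mu: "m < u" using A by auto
    define c where "c = (f u + f v) / 2"
    have fu0: "f u > 0" using fpos mu m by auto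
    have c: "f u < c" "c < f v" "c > 0" using lt fu0 by (auto simp: c_def)
    have "f v \<le> f m" using m mu A by auto
    obtain x1 where x1: "m < x1" "x1 < u" "f x1 = c" using cross[OF cf _ mu, of c] c \<open>f v \<le> f m\<close> m by force
    obtain x2 where x2: "u < x2" "x2 < v" "f x2 = c" using cross[OF cf _ A(2), of c] c m mu by force
    obtain X where X: "X > v" "\<bar>f X\<bar> < c" using tf' c by blast
    obtain x3 where x3: "v < x3" "x3 < X" "f x3 = c" using cross[OF cf _ X(1), of c] c X m mu A by force
    show False using P3[of x1 x2 x3 c] x1 x2 x3 m mu by force
  qed
  show ?thesis
  proof (rule ccontr)
    assume "\<not> f v < f u"
    hence eq: "f u = f v" using ni uv by force
    define w where "w = (u + v) / 2"
    have w: "u < w" "w < v" using uv by (auto simp: w_def)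
    have "f w \<le> f u" "f v \<le> f w" using ni[of u w] ni[of w v] w uv by force+
    hence "f w = f u" using eq by auto
    thus False using P3[of u w v "f u"] w uv m eq by force
  qed
qed

lemma f_inc:
  assumes m: "m > p" "\<forall>x>p. f x \<le> f m" and uv: "p < u" "u < v" "v \<le> m"
  shows "f u < f v"
proof -
  have nd: "\<not> f v < f u" if A: "p < u" "u < v" "v \<le> m" for u v
  proof
    assume lt: "f v < f u"
    have "v \<noteq> m" using lt m A by force
    hence vm: "v < m" using A by auto
    define c where "c = (f u + f v) / 2"
    have fv0: "f v > 0" using fpos A by auto
    have c: "f v < c" "c < f u" "c > 0" using lt fv0 by (auto simp: c_def)
    have "f u \<le> f m" using m A by auto
    obtain x1 where x1: "u < x1" "x1 < v" "f x1 = c" using cross[OF cf _ A(2), of c] c A by force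
    obtain x2 where x2: "v < x2" "x2 < m" "f x2 = c" using cross[OF cf _ vm, of c] c \<open>f u \<le> f m\<close> A by force
    obtain X where X: "X > m" "\<bar>f X\<bar> < c" using tf' c by blast
    obtain x3 where x3: "m < x3" "x3 < X" "f x3 = c" using cross[OF cf _ X(1), of c] c X m \<open>f u \<le> f m\<close> by force
    show False using P3[of x1 x2 x3 c] x1 x2 x3 m vm A by force
  qed
  show ?thesis
  proof (rule ccontr)
    assume "\<not> f u < f v"
    hence eq: "f u = f v" using nd uv by force
    define w where "w = (u + v) / 2"
    have w: "u < w" "w < v" using uv by (auto simp: w_def)
    have "f u \<le> f w" "f w \<le> f v" using nd[of u w] nd[of w v] w uv by force+
    hence "f w = f u" using eq by auto
    thus False using P3[of u w v "f u"] w uv eq by force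
  qed
qed


lemma cg: "continuous_on {p..} (\<lambda>x. - h x)"
  using ch by (intro continuous_intros)

lemma g_max: "\<exists>m>p. \<forall>x>p. - h x \<le> - h m"
proof -
  obtain x1 where x1: "x1 > p" "h x1 < 0" using exh by blast
  then obtain X where "\<forall>x\<ge>X. \<bar>h x\<bar> < - h x1" using th by force
  hence "\<forall>x\<ge>X. - h x < - h x1" by force
  thus ?thesis using exists_max[OF cg x1(1)] x1 hp L0 by auto
qed

lemma g_dec:
  assumes m: "m > p" "\<forall>x>p. - h x \<le> - h m" and uv: "m \<le> u" "u < v"
  shows "- h v < - h u"
proof -
  have ni: "\<not> - h u < - h v" if A: "m \<le> u" "u < v" for u v
  proof
    assume lt: "- h u < - h v"
    have "u \<noteq> m"
    proof
      assume "u = m" hence "- h v \<le> - h u" using m A by auto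
      thus False using lt by simp
    qed
    hence mu: "m < u" using A by auto
    have gm: "- h v \<le> - h m" using m mu A by auto
    show False
    proof (cases "- h v > 0")
      case True
      define c where "c = (max (- h u) 0 + - h v) / 2"
      have c: "- h u < c" "c < - h v" "c > 0" using lt True by (auto simp: c_def max_def)
      obtain x1 where x1: "m < x1" "x1 < u" "- h x1 = c" using cross[OF cg _ mu, of c] c gm m by force
      obtain x2 where x2: "u < x2" "x2 < v" "- h x2 = c" using cross[OF cg _ A(2), of c] c m mu by force
      obtain X where X: "X > v" "\<bar>h X\<bar> < c" using th' c by blast
      obtain x3 where x3: "v < x3" "x3 < X" "- h x3 = c" using cross[OF cg _ X(1), of c] c X m mu A by force
      show False using P3[of x1 x2 x3 "-c"] x1 x2 x3 m mu by force
    next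
      case False
      define c where "c = (- h u + - h v) / 2"
      have c: "- h u < c" "c < - h v" "c < 0" using lt False by (auto simp: c_def)
      obtain x1 where x1: "m < x1" "x1 < u" "- h x1 = c" using cross[OF cg _ mu, of c] c gm m by force
      obtain x2 where x2: "u < x2" "x2 < v" "- h x2 = c" using cross[OF cg _ A(2), of c] c m mu by force
      obtain X where X: "X > u" "\<bar>f X\<bar> < - c" using tf' c by force
      have "f u > - c" using hf[of u] m mu c by auto
      obtain x3 where x3: "u < x3" "x3 < X" "f x3 = - c" using cross[OF cf _ X(1), of "-c"] c X m mu \<open>f u > - c\<close> by force
      have "x3 \<noteq> x1" using hf[of x1] x1 x3 m by force
      moreover have "x3 \<noteq> x2" using hf[of x2] x2 x3 m mu by force
      ultimately show False using P3[of x1 x2 x3 "-c"] x1 x2 x3 m mu by force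
    qed
  qed
  show ?thesis
  proof (rule ccontr)
    assume "\<not> - h v < - h u"
    hence eq: "h u = h v" using ni uv by force
    define w where "w = (u + v) / 2"
    have w: "u < w" "w < v" using uv by (auto simp: w_def)
    have "- h w \<le> - h u" "- h v \<le> - h w" using ni[of u w] ni[of w v] w uv by force+
    hence "h w = h u" using eq by auto
    thus False using P3[of u w v "h u"] w uv m eq by force
  qed
qed

lemma g_inc:
  assumes m: "m > p" "\<forall>x>p. - h x \<le> - h m" and uv: "p < u" "u < v" "v \<le> m"
  shows "- h u < - h v"
proof -
  have nd: "\<not> - h v < - h u" if A: "p < u" "u < v" "v \<le> m" for u v
  proof
    assume lt: "- h v < - h u"
    have "v \<noteq> m"
    proof
      assume "v = m" hence "- h u \<le> - h v" using m A by auto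
      thus False using lt by simp
    qed
    hence vm: "v < m" using A by auto
    have gm: "- h u \<le> - h m" using m A by auto
    show False
    proof (cases "- h u > 0")
      case True
      define c where "c = (max (- h v) 0 + - h u) / 2"
      have c: "- h v < c" "c < - h u" "c > 0" using lt True by (auto simp: c_def max_def)
      obtain x1 where x1: "u < x1" "x1 < v" "- h x1 = c" using cross[OF cg _ A(2), of c] c A by force
      obtain x2 where x2: "v < x2" "x2 < m" "- h x2 = c" using cross[OF cg _ vm, of c] c gm A by force
      obtain X where X: "X > m" "\<bar>h X\<bar> < c" using th' c by blast
      obtain x3 where x3: "m < x3" "x3 < X" "- h x3 = c" using cross[OF cg _ X(1), of c] c X m gm by force
      show False using P3[of x1 x2 x3 "-c"] x1 x2 x3 m vm A by force
    next
      case False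
      define c1 where "c1 = (- h v + - h u) / 2"
      define c where "c = (if c1 \<noteq> - L then c1 else (- h v + c1) / 2)"
      have c1: "- h v < c1" "c1 < - h u" using lt by (auto simp: c1_def)
      have c: "- h v < c" "c < - h u" "c < 0" "c \<noteq> - L" using lt False c1 by (auto simp: c_def)
      obtain x1 where x1: "u < x1" "x1 < v" "- h x1 = c" using cross[OF cg _ A(2), of c] c A by force
      obtain x2 where x2: "v < x2" "x2 < m" "- h x2 = c" using cross[OF cg _ vm, of c] c gm A by force
      show False
      proof (cases "L > - c")
        case True
        obtain x3 where x3: "p < x3" "x3 < u" "h x3 = - c" using cross[OF ch _ A(1), of "-c"] c hp True by force
        show False using P3[of x1 x2 x3 "-c"] x1 x2 x3 m vm A by force
      next
        case False
        hence Lc: "L < - c" using c by auto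
        have "f v > - c" using hf[of v] A c by auto
        obtain x3 where x3: "p < x3" "x3 < v" "f x3 = - c" using cross[OF cf _ _, of p v "-c"] c fp Lc \<open>f v > - c\<close> A by force
        have "x3 \<noteq> x1" using hf[of x1] x1 x3 A by force
        moreover have "x3 \<noteq> x2" using hf[of x2] x2 x3 A by force
        ultimately show False using P3[of x1 x2 x3 "-c"] x1 x2 x3 m vm A by force
      qed
    qed
  qed
  show ?thesis
  proof (rule ccontr)
    assume "\<not> - h u < - h v"
    hence eq: "h u = h v" using nd uv by force
    define w where "w = (u + v) / 2"
    have w: "u < w" "w < v" using uv by (auto simp: w_def)
    have "- h u \<le> - h w" "- h w \<le> - h v" using nd[of u w] nd[of w v] w uv by force+
    hence "h w = h u" using eq by auto
    thus False using P3[of u w v "h u"] w uv eq by force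
  qed
qed

lemma main_f: "\<exists>!x. local_extremum_on {p<..} f x"
proof -
  obtain m where m: "m > p" "\<forall>x>p. f x \<le> f m" using f_max by blast
  show ?thesis
    by (rule shape_unique[OF m]) (use f_inc[OF m] f_dec[OF m] in auto)
qed

lemma le_neg: "local_extremum_on S (\<lambda>x. - k x) x \<longleftrightarrow> local_extremum_on S k x"
  unfolding local_extremum_on_def by auto

lemma main_h: "\<exists>!x. local_extremum_on {p<..} h x"
proof -
  obtain m where m: "m > p" "\<forall>x>p. - h x \<le> - h m" using g_max by blast
  have "\<exists>!x. local_extremum_on {p<..} (\<lambda>x. - h x) x"
    by (rule shape_unique[OF m]) (use g_inc[OF m] g_dec[OF m] in auto)
  thus ?thesis unfolding le_neg .
qed

end



definition Rq :: "real \<Rightarrow> real \<Rightarrow> real \<Rightarrow> real \<Rightarrow> real \<Rightarrow> real" where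
  "Rq M a Q E r = E^2*r^4 + (a^2*E^2-1-Q)*r^2 + 2*M*((a*E-1)^2+Q)*r + (- (a^2*Q))"
definition Wf :: "real \<Rightarrow> real \<Rightarrow> real \<Rightarrow> real \<Rightarrow> real" where
  "Wf M a Q r = r * kerr_Delta M a r * ((1 + Q) * r^3 + a^2 * Q * (r + 2*M))"
definition Pf :: "real \<Rightarrow> real \<Rightarrow> real \<Rightarrow> real" where
  "Pf M a r = r * (r * (r^2 + a^2) + 2*M*a^2)"

lemma Rq_alt: "Rq M a Q E r = ((r^2+a^2)*E - a)^2 - kerr_Delta M a r * (Q + (a*E-1)^2)"
  unfolding Rq_def kerr_Delta_def by algebra

lemma Rq_P: "Rq M a Q E r * Pf M a r = (Pf M a r * E - 2*M*a*r)^2 - Wf M a Q r"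
  unfolding Rq_def Wf_def Pf_def kerr_Delta_def by algebra

lemma Vp_eq: "V_plus M a r Q = (2*M*a*r + sqrt (Wf M a Q r)) / Pf M a r"
  unfolding V_plus_def Wf_def Pf_def by simp
lemma Vm_eq: "V_minus M a r Q = (2*M*a*r - sqrt (Wf M a Q r)) / Pf M a r"
  unfolding V_minus_def Wf_def Pf_def by simp

lemma Rq_fact:
  assumes "Wf M a Q r \<ge> 0" "Pf M a r > 0"
  shows "Rq M a Q E r = Pf M a r * (E - V_plus M a r Q) * (E - V_minus M a r Q)"
proof -
  define P where "P = Pf M a r"
  define W where "W = Wf M a Q r"
  define B where "B = 2*M*a*r"
  have s: "sqrt W ^ 2 = W" using assms(1) W_def by simp
  have "P * (E - (B + sqrt W)/P) * (E - (B - sqrt W)/P) = ((P*E - B)^2 - sqrt W ^ 2) / P"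
    using assms(2) P_def by (simp add: field_simps power2_eq_square)
  also have "\<dots> = Rq M a Q E r"
    using Rq_P[of M a Q E r] s assms(2) unfolding P_def W_def B_def by (simp add: field_simps)
  finally show ?thesis unfolding Vp_eq Vm_eq P_def W_def B_def by simp
qed


context
  fixes M a Q :: real
  assumes M0: "M > 0" and a0: "0 \<le> a" and aM: "a < M" and Q0: "Q \<ge> 0"
begin

definition "sM = sqrt (M^2 - a^2)"

lemma sM: "sM > 0" "sM^2 = M^2 - a^2" "sM \<le> M"
proof -
  have "a^2 < M^2" using a0 aM by (simp add: power_strict_mono)
  hence "M^2 - a^2 > 0" by simp
  thus "sM > 0" "sM^2 = M^2 - a^2" unfolding sM_def by auto
  have "sqrt (M^2 - a^2) \<le> sqrt (M^2)" by (rule real_sqrt_le_mono) simp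
  thus "sM \<le> M" unfolding sM_def using M0 by simp
qed

lemma rp: "r_plus M a = M + sM" unfolding r_plus_def sM_def by simp

lemma Delta_fact: "kerr_Delta M a r = (r - (M + sM)) * (r - (M - sM))"
  unfolding kerr_Delta_def using sM(2) by (simp add: algebra_simps power2_eq_square)

lemma rp_props: "r_plus M a > 0" "r_plus M a \<le> 2*M" "kerr_Delta M a (r_plus M a) = 0"
  using sM M0 unfolding rp by (auto simp: Delta_fact)

lemma pos_facts:
  assumes "r > r_plus M a"
  shows "r > 0" "kerr_Delta M a r > 0" "Wf M a Q r > 0" "Pf M a r > 0"
proof -
  show r0: "r > 0" using assms rp_props by linarith
  show D: "kerr_Delta M a r > 0" using assms sM unfolding Delta_fact rp by (auto intro!: mult_pos_pos)
  have S: "(1 + Q) * r^3 + a^2 * Q * (r + 2*M) > 0"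
    using Q0 r0 M0 by (intro add_pos_nonneg) (auto intro!: mult_nonneg_nonneg)
  show "Wf M a Q r > 0" unfolding Wf_def using r0 D S by simp
  show "Pf M a r > 0" unfolding Pf_def using r0 M0 by (intro mult_pos_pos add_pos_nonneg) auto
qed

lemma Rq_rp: "Rq M a Q E (r_plus M a) \<ge> 0"
  unfolding Rq_alt using rp_props by simp

lemma Rq_zero: "r > r_plus M a \<Longrightarrow> V_plus M a r Q = c \<or> V_minus M a r Q = c \<Longrightarrow> Rq M a Q c r = 0"
  using Rq_fact[of M a Q r c] pos_facts[of r] by auto

lemma no3:
  assumes "x > r_plus M a" "y > r_plus M a" "z > r_plus M a" "x \<noteq> y" "x \<noteq> z" "y \<noteq> z"
    and r: "Rq M a Q E x = 0" "Rq M a Q E y = 0" "Rq M a Q E z = 0"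
  shows False
proof -
  note R = r[unfolded Rq_def]
  have p: "r_plus M a > 0" using rp_props by auto
  show False
  proof (cases "E = 0")
    case True
    have "E^2*(z^2 + z*y + y^2 + x*z + x*y + x^2) + (a^2*E^2-1-Q) = 0"
      using three_roots[OF assms(4,5,6) R] .
    thus False using True Q0 by simp
  next
    case E: False
    hence A: "E^2 > 0" by simp
    have "\<exists>x0. 0 \<le> x0 \<and> x0 \<le> r_plus M a \<and> Rq M a Q E x0 = 0"
    proof (cases "a^2*Q = 0")
      case True thus ?thesis by (intro exI[of _ 0]) (auto simp: Rq_def p less_imp_le)
    next
      case False
      hence "a^2 * Q > 0" using Q0 by (simp add: order_less_le)
      hence "Rq M a Q E 0 \<le> 0" by (simp add: Rq_def)
      moreover have "continuous_on {0..r_plus M a} (Rq M a Q E)"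
        unfolding Rq_def by (intro continuous_intros)
      ultimately show ?thesis using IVT'[of "Rq M a Q E" 0 0 "r_plus M a"] Rq_rp p by auto
    qed
    then obtain x0 where x0: "0 \<le> x0" "x0 \<le> r_plus M a" "Rq M a Q E x0 = 0" by blast
    have "E^2*(x0+x+y+z) = 0"
      using four_roots[of x0 x y z "E^2" "a^2*E^2-1-Q" "2*M*((a*E-1)^2+Q)" "- (a^2*Q)"]
        x0 assms R[unfolded Rq_def] by (auto simp: Rq_def)
    moreover have "x0+x+y+z > 0" using x0 assms p by linarith
    ultimately show False using A by simp
  qed
qed


lemma Pf_pos: "r > 0 \<Longrightarrow> Pf M a r > 0"
  unfolding Pf_def using M0 by (intro mult_pos_pos add_pos_nonneg) auto

lemma cont_V:
  "continuous_on {r_plus M a..} (\<lambda>r. V_plus M a r Q)"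
  "continuous_on {r_plus M a..} (\<lambda>r. V_minus M a r Q)"
proof -
  have nz: "\<forall>r\<in>{r_plus M a..}. Pf M a r \<noteq> 0"
  proof
    fix r assume "r \<in> {r_plus M a..}"
    hence "r > 0" using rp_props(1) by auto
    thus "Pf M a r \<noteq> 0" using Pf_pos by force
  qed
  show "continuous_on {r_plus M a..} (\<lambda>r. V_plus M a r Q)"
    unfolding Vp_eq using nz unfolding Wf_def Pf_def kerr_Delta_def
    by (intro continuous_intros) auto
  show "continuous_on {r_plus M a..} (\<lambda>r. V_minus M a r Q)"
    unfolding Vm_eq using nz unfolding Wf_def Pf_def kerr_Delta_def
    by (intro continuous_intros) auto
qed

definition "LH = a / ((r_plus M a)^2 + a^2)"

lemma V_at_rp: "V_plus M a (r_plus M a) Q = LH" "V_minus M a (r_plus M a) Q = LH"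
proof -
  define p where "p = r_plus M a"
  have p0: "p > 0" using rp_props p_def by auto
  have D: "p^2 + a^2 = 2*M*p" using rp_props(3) unfolding p_def kerr_Delta_def by simp
  have W: "Wf M a Q p = 0" unfolding Wf_def p_def using rp_props by simp
  have "Pf M a p = p*(p*(p^2+a^2)+2*M*a^2)" unfolding Pf_def ..
  also have "\<dots> = p*(p*(2*M*p)+2*M*a^2)" using D by simp
  also have "\<dots> = 2*M*p*(p^2+a^2)" by (simp add: algebra_simps power2_eq_square)
  finally have P: "Pf M a p = 2*M*p*(p^2+a^2)" .
  have d: "p^2 + a^2 > 0" using p0 by (simp add: add_pos_nonneg)
  have nz: "2*M*p \<noteq> 0" using p0 M0 by simp
  have "2*M*a*p / Pf M a p = (2*M*p*a) / (2*M*p*(p^2+a^2))" unfolding P by (simp add: ac_simps)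
  also have "\<dots> = a / (p^2+a^2)" by (rule nonzero_mult_divide_mult_cancel_left[OF nz])
  finally have "2*M*a*p / Pf M a p = LH" unfolding LH_def p_def .
  thus "V_plus M a (r_plus M a) Q = LH" "V_minus M a (r_plus M a) Q = LH"
    unfolding Vp_eq Vm_eq W p_def[symmetric] by simp_all
qed

lemma LH_props: "LH \<ge> 0" "LH * ((r_plus M a)^2 + a^2) = a" "a * LH < 1"
proof -
  define p where "p = r_plus M a"
  have p0: "p > 0" using rp_props p_def by auto
  have d: "p^2 + a^2 > 0" using p0 by (simp add: add_pos_nonneg)
  show "LH \<ge> 0" unfolding LH_def using a0 by simp
  show "LH * ((r_plus M a)^2 + a^2) = a" unfolding LH_def using d p_def by simp
  have "a * LH = a^2 / (p^2+a^2)" unfolding LH_def p_def by (simp add: power2_eq_square)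
  also have "\<dots> < 1" using d p0 by (simp add: divide_less_eq)
  finally show "a * LH < 1" .
qed

lemma exf: "\<exists>x>r_plus M a. V_plus M a x Q > LH"
proof -
  define p where "p = r_plus M a"
  define D where "D = 4*LH^2*p^3 + 2*(a^2*LH^2-1-Q)*p + 2*M*((a*LH-1)^2+Q)"
  have der: "DERIV (Rq M a Q LH) p :> D" unfolding Rq_def D_def
    by (auto intro!: derivative_eq_intros simp: algebra_simps power2_eq_square power3_eq_cube)
  have "D = 4*p*LH*((p^2+a^2)*LH - a) - (2*p - 2*M)*(Q + (a*LH-1)^2)"
    unfolding D_def by algebra
  also have "\<dots> = - (2*sM)*(Q + (a*LH-1)^2)" using LH_props unfolding p_def rp by (simp add: mult.commute)
  finally have DD: "D = - (2*sM)*(Q + (a*LH-1)^2)" .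
  have "(a*LH-1)^2 > 0" using LH_props by simp
  hence "Q + (a*LH-1)^2 > 0" using Q0 by linarith
  hence "2*sM*(Q + (a*LH-1)^2) > 0" using sM by simp
  hence "D < 0" unfolding DD by simp
  then obtain d where d: "d > 0" "\<forall>h>0. h < d \<longrightarrow> Rq M a Q LH p > Rq M a Q LH (p + h)"
    using DERIV_neg_dec_right[OF der] by blast
  have R0: "Rq M a Q LH p = 0" unfolding Rq_alt p_def using rp_props LH_props
    by (simp add: mult.commute)
  define x where "x = p + d/2"
  have x: "x > r_plus M a" using d p_def x_def by auto
  have "Rq M a Q LH x < 0" using d R0 x_def by auto
  hence neg: "Pf M a x * (LH - V_plus M a x Q) * (LH - V_minus M a x Q) < 0"
    using Rq_fact[of M a Q x LH] pos_facts[OF x] by simp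
  have "V_minus M a x Q < V_plus M a x Q"
    unfolding Vp_eq Vm_eq using pos_facts[OF x] by (simp add: divide_strict_right_mono)
  have "\<not> V_plus M a x Q \<le> LH"
  proof
    assume "V_plus M a x Q \<le> LH"
    hence "LH - V_plus M a x Q \<ge> 0" "LH - V_minus M a x Q \<ge> 0" using \<open>V_minus M a x Q < V_plus M a x Q\<close> by auto
    hence "Pf M a x * (LH - V_plus M a x Q) * (LH - V_minus M a x Q) \<ge> 0"
      using pos_facts[OF x] by (simp add: mult_nonneg_nonneg)
    thus False using neg by simp
  qed
  hence "V_plus M a x Q > LH" by simp
  thus ?thesis using x by blast
qed

lemma exh: "\<exists>x>r_plus M a. V_minus M a x Q < 0"
proof -
  define x where "x = 2*M+1"
  have x: "x > r_plus M a" using rp_props x_def by auto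
  have "Rq M a Q 0 x = - (1+Q)*x*(x - 2*M) - a^2*Q" unfolding Rq_def by (simp add: algebra_simps power2_eq_square)
  also have "\<dots> < 0"
  proof -
    have "x*(x - 2*M) > 0" unfolding x_def using M0 by simp
    hence "(1+Q)*(x*(x - 2*M)) > 0" using Q0 by simp
    moreover have "a^2*Q \<ge> 0" using Q0 by simp
    moreover have "- (1+Q)*x*(x - 2*M) = - ((1+Q)*(x*(x - 2*M)))" by algebra
    ultimately show ?thesis by linarith
  qed
  finally have "Rq M a Q 0 x < 0" .
  hence neg: "Pf M a x * (0 - V_plus M a x Q) * (0 - V_minus M a x Q) < 0"
    using Rq_fact[of M a Q x 0] pos_facts[OF x] by simp
  have "V_minus M a x Q < V_plus M a x Q"
    unfolding Vp_eq Vm_eq using pos_facts[OF x] by (simp add: divide_strict_right_mono)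
  have "\<not> V_minus M a x Q \<ge> 0"
  proof
    assume "V_minus M a x Q \<ge> 0"
    hence "0 - V_plus M a x Q \<le> 0" "0 - V_minus M a x Q \<le> 0" using \<open>V_minus M a x Q < V_plus M a x Q\<close> by auto
    hence "(0 - V_plus M a x Q) * (0 - V_minus M a x Q) \<ge> 0" by (rule mult_nonpos_nonpos)
    hence "Pf M a x * ((0 - V_plus M a x Q) * (0 - V_minus M a x Q)) \<ge> 0"
      using pos_facts[OF x] by simp
    thus False using neg by (simp add: mult.assoc)
  qed
  hence "V_minus M a x Q < 0" by simp
  thus ?thesis using x by blast
qed


lemma V_order: "x > r_plus M a \<Longrightarrow> V_minus M a x Q < V_plus M a x Q"
  unfolding Vp_eq Vm_eq using pos_facts[of x] by (simp add: divide_strict_right_mono)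

lemma Vp_pos: "x > r_plus M a \<Longrightarrow> V_plus M a x Q > 0"
  unfolding Vp_eq using pos_facts[of x] M0 a0 by (auto intro!: divide_pos_pos add_nonneg_pos)

lemma tails:
  assumes e: "e > 0"
  shows "\<exists>X. \<forall>x\<ge>X. \<bar>V_plus M a x Q\<bar> < e \<and> \<bar>V_minus M a x Q\<bar> < e"
proof -
  define K where "K = 2 + sqrt (1+4*Q)"
  have "sqrt (1+4*Q) \<ge> 0" using Q0 by simp
  hence K0: "K > 0" unfolding K_def by linarith
  show ?thesis
  proof (intro exI[of _ "max (r_plus M a + 1) (K/e + 1)"] allI impI)
    fix x assume "x \<ge> max (r_plus M a + 1) (K/e + 1)"
    hence xp: "x > r_plus M a" and xK: "x > K/e" by auto
    note pf = pos_facts[OF xp]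
    have xM: "x \<ge> M" using xp sM unfolding rp by linarith
    have ax: "a \<le> x" using aM xM by linarith
    have a2: "a^2 \<le> x^2" using a0 ax by (simp add: power_mono)
    have a2M: "a^2 \<le> M^2" using a0 aM by (simp add: power_mono)
    have "M^2 \<le> M*x" using xM M0 by (simp add: power2_eq_square)
    moreover have "M*x \<ge> 0" using M0 pf(1) by simp
    ultimately have "a^2 \<le> 2*M*x" using a2M by linarith
    hence Dx: "kerr_Delta M a x \<le> x^2" unfolding kerr_Delta_def by simp
    have "a^2*(x+2*M) \<le> x^2*(3*x)" using a2 xM M0 by (intro mult_mono) auto
    hence "Q*(a^2*(x+2*M)) \<le> Q*(x^2*(3*x))" using Q0 by (simp add: mult_left_mono)
    hence S: "(1 + Q) * x^3 + a^2 * Q * (x + 2*M) \<le> (1+4*Q)*x^3"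
      by (simp add: algebra_simps power2_eq_square power3_eq_cube)
    have S0: "(1 + Q) * x^3 + a^2 * Q * (x + 2*M) \<ge> 0" using Q0 pf(1) M0 by simp
    have xD: "x * kerr_Delta M a x \<le> x * x^2" using Dx pf(1) by simp
    have "Wf M a Q x \<le> (x * x^2) * ((1+4*Q)*x^3)" unfolding Wf_def
      by (rule mult_mono[OF xD S]) (use pf(1) S0 in auto)
    also have "\<dots> = (1+4*Q)*(x^3)^2" by (simp add: power2_eq_square power3_eq_cube)
    finally have W: "Wf M a Q x \<le> (1+4*Q)*(x^3)^2" .
    have "sqrt (Wf M a Q x) \<le> sqrt ((1+4*Q)*(x^3)^2)" using W by (rule real_sqrt_le_mono)
    also have "\<dots> = sqrt (1+4*Q) * sqrt ((x^3)^2)" by (rule real_sqrt_mult)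
    also have "\<dots> = sqrt (1+4*Q) * x^3" using pf(1) by (simp only: real_sqrt_abs) simp
    finally have sW: "sqrt (Wf M a Q x) \<le> sqrt (1+4*Q) * x^3" .
    have "M*a \<le> x*x" using xM ax M0 a0 by (intro mult_mono) auto
    hence "2*M*a*x \<le> 2*x^3" using pf(1) by (simp add: power3_eq_cube mult_right_mono)
    hence N: "2*M*a*x + sqrt (Wf M a Q x) \<le> K*x^3" unfolding K_def using sW
      by (simp add: algebra_simps)
    have N0: "2*M*a*x \<ge> 0" using M0 a0 pf(1) by simp
    have sW0: "sqrt (Wf M a Q x) \<ge> 0" using pf(3) by simp
    have "Pf M a x = x^4 + (x^2*a^2 + 2*M*a^2*x)" unfolding Pf_def by algebra
    moreover have "x^2*a^2 + 2*M*a^2*x \<ge> 0" using pf(1) M0 by simp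
    ultimately have P4: "x^4 \<le> Pf M a x" by linarith
    have x4: "x^4 > 0" using pf(1) by simp
    have bound: "\<bar>y\<bar> / Pf M a x < e" if "\<bar>y\<bar> \<le> 2*M*a*x + sqrt (Wf M a Q x)" for y
    proof -
      have "\<bar>y\<bar> / Pf M a x \<le> (K*x^3) / Pf M a x"
        using that N pf by (simp add: divide_right_mono)
      also have "\<dots> \<le> (K*x^3) / x^4"
        using K0 pf(1) P4 x4 pf(4) by (intro divide_left_mono) (auto intro: mult_pos_pos)
      also have "\<dots> = K / x" using pf(1) by (simp add: power4_eq_xxxx power3_eq_cube)
      also have "\<dots> < e" using xK e pf(1) by (simp add: divide_less_eq pos_divide_less_eq mult.commute)
      finally show ?thesis .
    qed
    have "\<bar>V_plus M a x Q\<bar> = \<bar>2*M*a*x + sqrt (Wf M a Q x)\<bar> / Pf M a x"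
      unfolding Vp_eq using pf by simp
    moreover have "\<bar>V_minus M a x Q\<bar> = \<bar>2*M*a*x - sqrt (Wf M a Q x)\<bar> / Pf M a x"
      unfolding Vm_eq using pf by simp
    moreover have "\<bar>2*M*a*x - sqrt (Wf M a Q x)\<bar> \<le> 2*M*a*x + sqrt (Wf M a Q x)"
      using N0 sW0 by (simp add: abs_le_iff)
    ultimately show "\<bar>V_plus M a x Q\<bar> < e \<and> \<bar>V_minus M a x Q\<bar> < e"
      using bound[of "2*M*a*x + sqrt (Wf M a Q x)"] bound[of "2*M*a*x - sqrt (Wf M a Q x)"] N0 sW0 by auto
  qed
qed

lemma final_pair:
  "(\<exists>!r. local_extremum_on {r_plus M a<..} (\<lambda>r. V_plus M a r Q) r)
 \<and> (\<exists>!r. local_extremum_on {r_plus M a<..} (\<lambda>r. V_minus M a r Q) r)"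
proof -
  interpret S: shp "r_plus M a" LH "\<lambda>r. V_plus M a r Q" "\<lambda>r. V_minus M a r Q"
  proof
    show "continuous_on {r_plus M a..} (\<lambda>r. V_plus M a r Q)" by (rule cont_V)
    show "continuous_on {r_plus M a..} (\<lambda>r. V_minus M a r Q)" by (rule cont_V)
    show "V_plus M a (r_plus M a) Q = LH" "V_minus M a (r_plus M a) Q = LH" by (rule V_at_rp)+
    show "LH \<ge> 0" by (rule LH_props)
    show "\<And>x. x > r_plus M a \<Longrightarrow> V_minus M a x Q < V_plus M a x Q" by (rule V_order)
    show "\<And>x. x > r_plus M a \<Longrightarrow> V_plus M a x Q > 0" by (rule Vp_pos)
    show "\<And>c x y z. r_plus M a < x \<Longrightarrow> r_plus M a < y \<Longrightarrow> r_plus M a < z \<Longrightarrow> x \<noteq> y \<Longrightarrow> x \<noteq> z \<Longrightarrow> y \<noteq> z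
      \<Longrightarrow> (V_plus M a x Q = c \<or> V_minus M a x Q = c) \<Longrightarrow> (V_plus M a y Q = c \<or> V_minus M a y Q = c)
      \<Longrightarrow> (V_plus M a z Q = c \<or> V_minus M a z Q = c) \<Longrightarrow> False"
      using Rq_zero no3 by metis
    show "\<And>e. e > 0 \<Longrightarrow> \<exists>X. \<forall>x\<ge>X. \<bar>V_plus M a x Q\<bar> < e" using tails by metis
    show "\<And>e. e > 0 \<Longrightarrow> \<exists>X. \<forall>x\<ge>X. \<bar>V_minus M a x Q\<bar> < e" using tails by metis
    show "\<exists>x>r_plus M a. V_plus M a x Q > LH" by (rule exf)
    show "\<exists>x>r_plus M a. V_minus M a x Q < 0" by (rule exh)
  qed
  show ?thesis using S.main_f S.main_h by blast
qed

end


theorem lemma2: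
  fixes M a Q :: real
  assumes "M > 0" and "0 \<le> a" and "a < M" and "Q \<ge> 0"
  shows "(\<exists>!r. local_extremum_on {r_plus M a<..} (\<lambda>r. V_plus M a r Q) r)
       \<and> (\<exists>!r. local_extremum_on {r_plus M a<..} (\<lambda>r. V_minus M a r Q) r)"
  by (rule final_pair[OF assms])

end
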